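(* Let $N=\mathbb R^2\setminus\{0\}$ with the Lorentz metric $\dfrac{du\odot dv}{u^2+v^2}$, and let $d:N\to M$ be its complexification as described in the context. Then every null geodesic of $N$ is complete in the sense defined in the context.
   Context: $N=\mathbb R^2\setminus\{0\}$ with coordinates $(u,v)$ and the Lorentz metric $\frac{du\odot dv}{u^2+v^2}$ (here $du\odot dv$ denotes the symmetric product). Its complexification is $M=\mathbb C^2\setminus\big((1,i)\mathbb C\cup(1,-i)\mathbb C\big)$ with the holomorphic metric given by the same formula $\frac{du\odot dv}{u^2+v^2}$, and $d:N\to M$ the inclusion. (A holomorphic metric on a complex manifold is an everywhere nondegenerate symmetric holomorphic section of the bundle of twice covariant holomorphic tensors; it has a Levi-Civita connection and holomorphic geodesics.) Analytic continuation / Riemann surface: for a holomorphic map element $f:\mathcal U\to M$ on a region $\mathcal U\subset\mathbb C$, an analytic continuation is a quadruple $(S,\pi,j,G)$ with $S$ a connected Riemann surface, $\pi:S\to\mathbb C$ nonconstant holomorphic, $\mathcal U\subset\pi(S)$, $j:\mathcal U\to S$ a holomorphic immersion with $\pi\circ j=\mathrm{id}$, $G:S\to M$ holomorphic with $G\circ j=f$; the Riemann surface of $f$ is the unique maximal such continuation. Completeness: a real-analytic curve $\gamma$ in a real-analytic manifold $N$ with complexification $d:N\to M$ is called complete if the Riemann surface $(S,\pi,j,G)$ of (the holomorphic extension of) $d\circ\gamma$ satisfies that $\mathbb R\setminus\pi\big(G^{-1}(d(N))\big)$ is a discrete set. A geodesic is null if its velocity $(\dot u,\dot v)$ satisfies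 $\dot u\dot v=0$. *)

theory Defs
  imports "HOL-Analysis.Analysis"
begin

definition coord :: "nat \<Rightarrow> real \<times> real \<Rightarrow> real" where
  "coord i p = (if i = 0 then fst p else snd p)"

definition unitv :: "nat \<Rightarrow> real \<times> real" where
  "unitv i = (if i = 0 then (1, 0) else (0, 1))"

definition N_set :: "(real \<times> real) set" where
  "N_set = UNIV - {(0, 0)}"

text \<open>Components g_ij of the metric du.dv/(u^2+v^2), with the symmetric product
  du.dv = (du (x) dv + dv (x) du)/2 (a different normalisation only rescales the metric by a
  constant and does not change geodesics).\<close>

definition gN :: "nat \<Rightarrow> nat \<Rightarrow> real \<times> real \<Rightarrow> real" where
  "gN i j p = (if i \<noteq> j then 1 / (2 * ((fst p)\<^sup>2 + (snd p)\<^sup>2)) else 0)"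

definition inv_metric :: "(nat \<Rightarrow> nat \<Rightarrow> real \<times> real \<Rightarrow> real) \<Rightarrow> nat \<Rightarrow> nat \<Rightarrow> real \<times> real \<Rightarrow> real" where
  "inv_metric g i j p =
     (let a = g 0 0 p; b = g 0 1 p; c = g 1 1 p; det = a * c - b * g 1 0 p in
      if i = 0 \<and> j = 0 then c / det
      else if i = 1 \<and> j = 1 then a / det
      else if i = 0 then - b / det else - g 1 0 p / det)"

definition pd :: "nat \<Rightarrow> (real \<times> real \<Rightarrow> real) \<Rightarrow> real \<times> real \<Rightarrow> real" where
  "pd i h p = deriv (\<lambda>s. h (p + s *\<^sub>R unitv i)) 0"

definition christoffel :: "(nat \<Rightarrow> nat \<Rightarrow> real \<times> real \<Rightarrow> real) \<Rightarrow> nat \<Rightarrow> nat \<Rightarrow> nat \<Rightarrow> real \<times> real \<Rightarrow> real" where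
  "christoffel g k i j p =
     (\<Sum>l<2. inv_metric g k l p * (pd i (g j l) p + pd j (g i l) p - pd l (g i j) p)) / 2"

definition is_geodesic :: "real set \<Rightarrow> (real \<Rightarrow> real \<times> real) \<Rightarrow> bool" where
  "is_geodesic I \<gamma> \<longleftrightarrow> is_interval I \<and> open I \<and> I \<noteq> {} \<and> \<gamma> ` I \<subseteq> N_set \<and>
     (\<exists>\<gamma>' \<gamma>''. \<forall>t\<in>I. (\<gamma> has_vector_derivative \<gamma>' t) (at t) \<and>
        (\<gamma>' has_vector_derivative \<gamma>'' t) (at t) \<and>
        (\<forall>k<2. coord k (\<gamma>'' t) +
           (\<Sum>i<2. \<Sum>j<2. christoffel gN k i j (\<gamma> t) * coord i (\<gamma>' t) * coord j (\<gamma>' t)) = 0))"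

definition is_null_geodesic :: "real set \<Rightarrow> (real \<Rightarrow> real \<times> real) \<Rightarrow> bool" where
  "is_null_geodesic I \<gamma> \<longleftrightarrow> is_geodesic I \<gamma> \<and>
     (\<forall>t\<in>I. fst (vector_derivative \<gamma> (at t)) * snd (vector_derivative \<gamma> (at t)) = 0)"

text \<open>M = C^2 minus the lines (1,i)C and (1,-i)C, i.e. the set where u^2 + v^2 \<noteq> 0.\<close>

definition M_set :: "(complex \<times> complex) set" where
  "M_set = {p. \<not> (\<exists>c. p = (c, \<i> * c) \<or> p = (c, - \<i> * c))}"

definition dmap :: "real \<times> real \<Rightarrow> complex \<times> complex" where
  "dmap p = (complex_of_real (fst p), complex_of_real (snd p))"

definition holo2 :: "(complex \<Rightarrow> complex \<times> complex) \<Rightarrow> complex set \<Rightarrow> bool" where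
  "holo2 F S \<longleftrightarrow> (\<lambda>z. fst (F z)) holomorphic_on S \<and> (\<lambda>z. snd (F z)) holomorphic_on S"

text \<open>The points of the Riemann surface of f are exactly the end elements of such continuations.\<close>

definition cont_along ::
  "(complex \<Rightarrow> complex \<times> complex) \<Rightarrow> complex set \<Rightarrow> (real \<Rightarrow> complex)
     \<Rightarrow> (real \<Rightarrow> complex \<Rightarrow> complex \<times> complex) \<Rightarrow> (real \<Rightarrow> real) \<Rightarrow> bool" where
  "cont_along f U \<sigma> g r \<longleftrightarrow> path \<sigma> \<and> \<sigma> 0 \<in> U \<and>
     (\<forall>t\<in>{0..1}. r t > 0 \<and> holo2 (g t) (ball (\<sigma> t) (r t)) \<and> g t ` ball (\<sigma> t) (r t) \<subseteq> M_set) \<and>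
     (\<forall>t\<in>{0..1}. \<exists>\<delta>>0. \<forall>s\<in>{0..1}. \<bar>s - t\<bar> < \<delta> \<longrightarrow>
        \<sigma> s \<in> ball (\<sigma> t) (r t) \<and>
        (\<forall>z \<in> ball (\<sigma> s) (r s) \<inter> ball (\<sigma> t) (r t). g s z = g t z)) \<and>
     (\<exists>e>0. ball (\<sigma> 0) e \<subseteq> U \<and> (\<forall>z \<in> ball (\<sigma> 0) e \<inter> ball (\<sigma> 0) (r 0). g 0 z = f z))"

text \<open>pi(G^{-1}(d(N))) for the Riemann surface (S,pi,j,G) of f : real points x over which
  some point of S is mapped by G into d(N).\<close>

definition real_points_over_dN :: "(complex \<Rightarrow> complex \<times> complex) \<Rightarrow> complex set \<Rightarrow> real set" where
  "real_points_over_dN f U =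
     {x. \<exists>\<sigma> g r. cont_along f U \<sigma> g r \<and> \<sigma> 1 = complex_of_real x \<and> g 1 (\<sigma> 1) \<in> dmap ` N_set}"

definition hol_extension ::
  "real set \<Rightarrow> (real \<Rightarrow> real \<times> real) \<Rightarrow> complex set \<Rightarrow> (complex \<Rightarrow> complex \<times> complex) \<Rightarrow> bool" where
  "hol_extension I \<gamma> U f \<longleftrightarrow> open U \<and> connected U \<and> complex_of_real ` I \<subseteq> U \<and>
     holo2 f U \<and> f ` U \<subseteq> M_set \<and> (\<forall>t\<in>I. f (complex_of_real t) = dmap (\<gamma> t))"

definition complete_curve :: "real set \<Rightarrow> (real \<Rightarrow> real \<times> real) \<Rightarrow> bool" where
  "complete_curve I \<gamma> \<longleftrightarrow> (\<exists>U f. hol_extension I \<gamma> U f) \<and>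
     (\<forall>U f. hol_extension I \<gamma> U f \<longrightarrow> discrete (UNIV - real_points_over_dN f U))"

end

theory Submission
  imports Defs "HOL-Complex_Analysis.Conformal_Mappings"
begin


definition r2 :: "real \<times> real \<Rightarrow> real" where "r2 p = fst p ^ 2 + snd p ^ 2"

lemma gN_simps: "gN 0 0 = (\<lambda>p. 0)" "gN 1 1 = (\<lambda>p. 0)"
  "gN 0 1 = (\<lambda>p. 1 / (2 * r2 p))" "gN 1 0 = (\<lambda>p. 1 / (2 * r2 p))"
  "gN (Suc 0) (Suc 0) = (\<lambda>p. 0)"
  "gN 0 (Suc 0) = (\<lambda>p. 1 / (2 * r2 p))" "gN (Suc 0) 0 = (\<lambda>p. 1 / (2 * r2 p))"
  by (auto simp: gN_def r2_def fun_eq_iff)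

lemma pd_zero: "pd i (\<lambda>p. 0) p = 0"
  by (simp add: pd_def)

lemma dh: fixes a b :: real assumes nz: "a^2+b^2 \<noteq> 0"
  shows "((\<lambda>s. 1/(2*((a+s)^2+b^2))) has_real_derivative -a/(a^2+b^2)^2) (at 0)"
proof -
  have g: "((\<lambda>s. 2*((a+s)^2+b^2)) has_real_derivative 4*a) (at 0)"
    by (auto intro!: derivative_eq_intros)
  have "(\<lambda>s. 2*((a+s)^2+b^2)) 0 \<noteq> 0" by (metis nz add_0_right mult_eq_0_iff zero_neq_numeral)
  from DERIV_inverse_fun[OF g this]
  have d: "((\<lambda>s. inverse (2*((a+s)^2+b^2))) has_real_derivative
     - (4*a * inverse ((2*(a^2+b^2))^2))) (at 0)" by (simp add: power2_eq_square)
  have e: "\<And>q::real. q \<noteq> 0 \<Longrightarrow> - (4*a * inverse ((2*q)^2)) = -a/q^2"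
    by (simp add: field_simps power2_eq_square)
  show ?thesis using d unfolding e[OF nz] by (simp add: inverse_eq_divide)
qed

lemma pd0h: assumes "r2 p \<noteq> 0"
  shows "pd 0 (\<lambda>p. 1 / (2 * r2 p)) p = - fst p / (r2 p)^2"
proof -
  have e: "(\<lambda>s. 1 / (2 * r2 (p + s *\<^sub>R unitv 0))) = (\<lambda>s. 1 / (2 * ((fst p + s)^2 + snd p ^2)))"
    by (auto simp: r2_def unitv_def fun_eq_iff)
  show ?thesis unfolding pd_def e using dh[of "fst p" "snd p"] assms
    by (simp add: r2_def DERIV_imp_deriv)
qed

lemma pd1h: assumes "r2 p \<noteq> 0"
  shows "pd 1 (\<lambda>p. 1 / (2 * r2 p)) p = - snd p / (r2 p)^2"
proof -
  have e: "(\<lambda>s. 1 / (2 * r2 (p + s *\<^sub>R unitv 1))) = (\<lambda>s. 1 / (2 * ((snd p + s)^2 + fst p ^2)))"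
    by (auto simp: r2_def unitv_def fun_eq_iff add.commute)
  show ?thesis unfolding pd_def e using dh[of "snd p" "fst p"] assms
    by (simp add: r2_def DERIV_imp_deriv add.commute)
qed

lemma inv_gN: assumes "r2 p \<noteq> 0"
  shows "inv_metric gN 0 0 p = 0" "inv_metric gN 1 1 p = 0"
   "inv_metric gN 0 1 p = 2 * r2 p" "inv_metric gN 1 0 p = 2 * r2 p"
   "inv_metric gN (Suc 0) (Suc 0) p = 0"
   "inv_metric gN 0 (Suc 0) p = 2 * r2 p" "inv_metric gN (Suc 0) 0 p = 2 * r2 p"
  using assms by (auto simp: inv_metric_def gN_simps Let_def power2_eq_square)

lemma chr: assumes "r2 p \<noteq> 0"
  shows "christoffel gN 0 0 0 p = - 2 * fst p / r2 p"
        "christoffel gN 1 1 1 p = - 2 * snd p / r2 p"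
        "christoffel gN 0 0 1 p = 0" "christoffel gN 0 1 0 p = 0" "christoffel gN 0 1 1 p = 0"
        "christoffel gN 1 0 0 p = 0" "christoffel gN 1 0 1 p = 0" "christoffel gN 1 1 0 p = 0"
  using assms
  by (simp_all add: christoffel_def numeral_2_eq_2 lessThan_Suc inv_gN gN_simps pd_zero pd0h pd1h
      pd1h[simplified] power2_eq_square)



lemma M_iff: "(x, y) \<in> M_set \<longleftrightarrow> x^2 + y^2 \<noteq> 0"
proof -
  have e: "x^2 + y^2 = (y - \<i>*x) * (y + \<i>*x)"
    by (simp add: algebra_simps power2_eq_square)
  show ?thesis
  proof
    assume m: "(x, y) \<in> M_set" show "x^2 + y^2 \<noteq> 0"
    proof
      assume "x^2 + y^2 = 0"
      then have "y - \<i>*x = 0 \<or> y + \<i>*x = 0" unfolding e by simp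
      then have "y = \<i>*x \<or> y = - \<i>*x" by (auto simp: add_eq_0_iff2)
      then show False using m unfolding M_set_def by auto
    qed
  next
    assume h: "x^2 + y^2 \<noteq> 0"
    show "(x, y) \<in> M_set" unfolding M_set_def
    proof (clarify)
      fix c assume "(x, y) = (c, \<i> * c) \<or> (x, y) = (c, - \<i> * c)"
      then have "x^2 + y^2 = 0" by (auto simp: power2_eq_square algebra_simps)
      then show False using h by simp
    qed
  qed
qed

lemma scalar_c:
  fixes p :: "real \<Rightarrow> real"
  assumes I: "is_interval I" "open I" "t0 \<in> I"
  and d: "\<forall>t\<in>I. (p has_real_derivative a*(p t^2 + c^2)) (at t)"
  and c: "c \<noteq> 0"
  shows "\<exists>P D Z. open D \<and> P holomorphic_on D \<and> (\<forall>z\<in>D. (P z)^2 + (of_real c)^2 \<noteq> 0) \<and>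
     (\<forall>z. Im z > 0 \<longrightarrow> z \<in> D) \<and> (\<forall>z. Re z \<in> I \<longrightarrow> z \<in> D) \<and>
     (\<forall>x. x \<notin> Z \<longrightarrow> complex_of_real x \<in> D) \<and> (\<forall>x. complex_of_real x \<in> D \<longrightarrow> P (of_real x) \<in> \<real>) \<and>
     discrete Z \<and> (\<forall>t\<in>I. P (of_real t) = of_real (p t))"
proof -
  define \<theta> where "\<theta> t = arctan (p t / c)" for t
  have dth: "((\<lambda>t. \<theta> t - a*c*t) has_real_derivative 0) (at t)" if "t \<in> I" for t
  proof -
    have "((\<lambda>t. \<theta> t - a*c*t) has_real_derivative
       inverse (1 + (p t / c)^2) * (a*(p t^2 + c^2)) / c - a*c) (at t)"
      unfolding \<theta>_def using d that c
      by (auto intro!: derivative_eq_intros)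
    moreover have "inverse (1 + (p t / c)^2) * (a*(p t^2 + c^2)) / c - a*c = 0"
    proof -
      have gen: "\<And>Q X::real. Q \<noteq> 0 \<Longrightarrow> (X / Q) * (a*Q) / c = a * X / c" by (simp add: field_simps)
      have cc: "c^2 > 0" using c by simp
      have q: "p t^2 + c^2 > 0" using cc by (simp add: add_nonneg_pos)
      have "1 + (p t / c)^2 = (p t^2 + c^2) / c^2" using c by (simp add: field_simps)
      then have "inverse (1 + (p t / c)^2) * (a*(p t^2 + c^2)) / c = (c^2 / (p t^2 + c^2)) * (a*(p t^2 + c^2)) / c"
        by simp
      also have "\<dots> = a * c^2 / c"
      proof (rule gen)
        show "p t^2 + c^2 \<noteq> 0" using q by linarith
      qed
      also have "\<dots> = a*c" using c by (simp add: power2_eq_square)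
      finally show ?thesis by simp
    qed
    ultimately show ?thesis by simp
  qed
  have "convex I" using I(1) by (rule is_interval_convex)
  then obtain \<beta> where \<beta>: "\<forall>t\<in>I. \<theta> t - a*c*t = \<beta>"
    using has_field_derivative_zero_constant[of I "\<lambda>t. \<theta> t - a*c*t"] dth
    by (meson has_field_derivative_at_within)
  have th: "\<theta> t = a*c*t + \<beta>" if "t \<in> I" for t using \<beta> that by force
  have cth: "cos (\<theta> t) \<noteq> 0" for t unfolding \<theta>_def by simp
  have pth: "p t = c * tan (\<theta> t)" for t
  proof -
    have "tan (\<theta> t) = p t / c" unfolding \<theta>_def by (rule tan_arctan)
    then show ?thesis using c by simp
  qed
  define w where "w z = complex_of_real (a*c) * z + of_real \<beta>" for z
  define P where "P z = of_real c * tan (w z)" for z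
  define D where "D = {z. cos (w z) \<noteq> 0}"
  define Z where "Z = {x. cos (a*c*x+\<beta>) = 0}"
  have cos0: "w z = of_real (Re (w z)) \<and> cos (Re (w z)) = 0" if "cos (w z) = 0" for z
  proof -
    have "\<exists>n::int. w z = complex_of_real(n * pi) + of_real pi/2"
      using that by (simp only: cos_eq_0)
    then obtain n::int where n: "w z = complex_of_real(n * pi) + of_real pi/2" by (elim exE)
    define y where "y = n*pi + pi/2"
    have wy: "w z = of_real y" unfolding n y_def by simp
    have "complex_of_real (cos y) = 0" using that unfolding wy cos_of_real .
    then have "cos y = 0" by (simp only: of_real_eq_0_iff)
    moreover have "Re (w z) = y" unfolding wy by (rule Re_complex_of_real)
    ultimately show ?thesis using wy by simp
  qed
  have Imw: "Im (w z) = a*c*Im z" for z unfolding w_def by simp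
  have Rew: "Re (w z) = a*c*Re z + \<beta>" for z unfolding w_def by simp
  have inD: "z \<in> D" if "a*c = 0 \<or> (Im z = 0 \<and> Re z \<in> I)" for z
  proof (rule ccontr)
    assume "z \<notin> D"
    then have "cos (w z) = 0" by (simp add: D_def)
    from cos0[OF this] have cz: "cos (Re (w z)) = 0" by blast
    from that show False
    proof
      assume "a*c = 0"
      then have "Re (w z) = \<theta> t0" using th[OF I(3)] Rew[of z] by simp
      then show False using cz cth by simp
    next
      assume "Im z = 0 \<and> Re z \<in> I"
      then have "Re (w z) = \<theta> (Re z)" using th Rew[of z] by simp
      then show False using cz cth by simp
    qed
  qed
  have wr: "w (of_real x) = of_real (a*c*x+\<beta>)" for x unfolding w_def by simp
  have "open D" unfolding D_def w_def
    by (rule open_Collect_neq) (auto intro!: continuous_intros)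
  moreover have "P holomorphic_on D" unfolding P_def D_def w_def tan_def
    by (auto intro!: holomorphic_intros)
  moreover have "(P z)^2 + (of_real c)^2 \<noteq> 0" if "z \<in> D" for z
  proof -
    have cz: "cos (w z) \<noteq> 0" using that by (simp add: D_def)
    have "(P z)^2 + (of_real c)^2 = (of_real c)^2 * ((sin (w z))^2 + (cos (w z))^2) / (cos (w z))^2"
      unfolding P_def tan_def using cz
      by (simp add: field_simps power2_eq_square del: sin_cos_squared_add sin_cos_squared_add2 sin_cos_squared_add3)
    also have "\<dots> = (of_real c)^2 / (cos (w z))^2" by (simp add: sin_cos_squared_add)
    finally show ?thesis using cz c by simp
  qed
  moreover have "\<forall>z. Im z > 0 \<longrightarrow> z \<in> D"
  proof (intro allI impI)
    fix z :: complex assume "Im z > 0"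
    show "z \<in> D"
    proof (cases "a*c = 0")
      case True then show ?thesis using inD by blast
    next
      case False
      show ?thesis
      proof (rule ccontr)
        assume "z \<notin> D"
        then have "cos (w z) = 0" by (simp add: D_def)
        from cos0[OF this] have "Im (w z) = 0" by (metis Im_complex_of_real)
        then show False using False \<open>Im z > 0\<close> Imw[of z] by simp
      qed
    qed
  qed
  moreover have "\<forall>z. Re z \<in> I \<longrightarrow> z \<in> D"
  proof (intro allI impI)
    fix z :: complex assume zI: "Re z \<in> I"
    show "z \<in> D"
    proof (cases "a*c = 0")
      case True then show ?thesis using inD by blast
    next
      case False
      show ?thesis
      proof (rule ccontr)
        assume "z \<notin> D"
        then have "cos (w z) = 0" by (simp add: D_def)
        from cos0[OF this] have "Im (w z) = 0" by (metis Im_complex_of_real)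
        then have "Im z = 0" using False Imw[of z] by simp
        then show False using inD zI \<open>z \<notin> D\<close> by blast
      qed
    qed
  qed
  moreover have "\<forall>x. x \<notin> Z \<longrightarrow> complex_of_real x \<in> D"
  proof (intro allI impI)
    fix x assume "x \<notin> Z"
    then have "cos (a*c*x+\<beta>) \<noteq> 0" by (simp add: Z_def)
    then have "cos (w (of_real x)) \<noteq> 0" unfolding wr cos_of_real by simp
    then show "complex_of_real x \<in> D" by (simp add: D_def)
  qed
  moreover have "\<forall>x. complex_of_real x \<in> D \<longrightarrow> P (of_real x) \<in> \<real>"
    unfolding P_def wr by (metis Reals_mult Reals_of_real tan_of_real)
  moreover have "discrete Z"
  proof (cases "a*c = 0")
    case True
    then have "Z = {}" unfolding Z_def using th[OF I(3)] cth[of t0] by auto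
    then show ?thesis by simp
  next
    case False
    have "uniform_discrete Z"
    proof (rule uniformI1[of "pi / \<bar>a*c\<bar>"])
      show "pi / \<bar>a*c\<bar> > 0" using False by simp
      fix x y assume "x \<in> Z" "y \<in> Z" "dist x y < pi / \<bar>a*c\<bar>"
      then obtain n m :: int where nm: "a*c*x+\<beta> = n*pi + pi/2" "a*c*y+\<beta> = m*pi + pi/2"
        and dl: "\<bar>x - y\<bar> < pi / \<bar>a*c\<bar>"
        unfolding Z_def cos_zero_iff_int2 dist_real_def by blast
      have "a*c*(x-y) = (n - m)*pi" using nm by (simp add: algebra_simps)
      then have "\<bar>(n - m)*pi\<bar> < pi" using dl False
        by (metis abs_mult mult.commute pos_less_divide_eq zero_less_abs_iff)
      then have "\<bar>real_of_int (n - m)\<bar> < 1" by (simp add: abs_mult)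
      then have "n = m" by linarith
      then have "a*c*x = a*c*y" using nm by (metis add_right_cancel)
      then show "x = y" using False by simp
    qed
    then show ?thesis by (rule uniform_discrete_imp_discrete)
  qed
  moreover have "\<forall>t\<in>I. P (of_real t) = of_real (p t)"
  proof
    fix t assume t: "t \<in> I"
    have "P (of_real t) = of_real c * tan (of_real (a*c*t+\<beta>))" unfolding P_def wr ..
    also have "\<dots> = of_real (c * tan (\<theta> t))" unfolding th[OF t] tan_of_real[symmetric] by simp
    also have "\<dots> = of_real (p t)" unfolding pth[symmetric] ..
    finally show "P (of_real t) = of_real (p t)" .
  qed
  ultimately show ?thesis by (intro exI[of _ P] exI[of _ D] exI[of _ Z]) blast
qed



lemma reach:
  assumes U: "open U" and t0U: "complex_of_real t0 \<in> U"
  and D: "open D" "holo2 F D" "F ` D \<subseteq> M_set"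
  and half: "\<forall>z. Im z > 0 \<longrightarrow> z \<in> D"
  and t0D: "complex_of_real t0 \<in> D" and xD: "complex_of_real x \<in> D"
  and FxN: "F (complex_of_real x) \<in> dmap ` N_set"
  and e: "e > 0" "ball (complex_of_real t0) e \<subseteq> U"
     "\<forall>z\<in>ball (complex_of_real t0) e. F z = f z"
  shows "x \<in> real_points_over_dN f U"
proof -
  define \<sigma> where "\<sigma> s = complex_of_real ((1-s)*t0 + s*x) + \<i> * complex_of_real (s*(1-s))" for s
  have s0: "\<sigma> 0 = complex_of_real t0" and s1: "\<sigma> 1 = complex_of_real x"
    by (simp_all add: \<sigma>_def)
  have \<sigma>D: "\<sigma> s \<in> D" if s01: "s \<in> {0..1}" for s
  proof -
    consider "s = 0" | "s = 1" | "0 < s \<and> s < 1" using s01 by fastforce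
    then show ?thesis
    proof cases
      case 1 then show ?thesis using s0 t0D by simp
    next
      case 2 then show ?thesis using s1 xD by simp
    next
      case 3
      then have "Im (\<sigma> s) > 0" by (simp add: \<sigma>_def)
      then show ?thesis using half by blast
    qed
  qed
  have ex: "\<exists>r. r > 0 \<and> ball (\<sigma> s) r \<subseteq> D" if "s \<in> {0..1}" for s
    using D(1) \<sigma>D[OF that] open_contains_ball by blast
  define r where "r s = (SOME r. r > 0 \<and> ball (\<sigma> s) r \<subseteq> D)" for s
  have r: "r s > 0 \<and> ball (\<sigma> s) (r s) \<subseteq> D" if "s \<in> {0..1}" for s
    unfolding r_def using someI_ex[OF ex[OF that]] .
  have cont: "continuous_on UNIV \<sigma>" unfolding \<sigma>_def by (auto intro!: continuous_intros)
  have isc: "isCont \<sigma> s" for s using cont by (simp add: continuous_on_eq_continuous_at)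
  have "cont_along f U \<sigma> (\<lambda>s. F) r" unfolding cont_along_def
  proof (intro conjI ballI)
    show "path \<sigma>" unfolding path_def using cont by (rule continuous_on_subset) simp
    show "\<sigma> 0 \<in> U" using s0 t0U by simp
  next
    fix t :: real assume t: "t \<in> {0..1}"
    show "r t > 0" using r[OF t] by blast
    show "holo2 F (ball (\<sigma> t) (r t))" using D(2) r[OF t] unfolding holo2_def
      by (meson holomorphic_on_subset)
    show "F ` ball (\<sigma> t) (r t) \<subseteq> M_set" using D(3) r[OF t] by blast
  next
    fix t :: real assume t: "t \<in> {0..1}"
    have "\<sigma> \<midarrow>t\<rightarrow> \<sigma> t" using isc[of t] by (simp add: continuous_at)
    from metric_LIM_D[OF this, of "r t"] r[OF t] obtain \<delta> where
      "\<delta> > 0" and \<delta>: "\<forall>s. s \<noteq> t \<and> dist s t < \<delta> \<longrightarrow> dist (\<sigma> s) (\<sigma> t) < r t" by blast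
    show "\<exists>\<delta>>0. \<forall>s\<in>{0..1}. \<bar>s - t\<bar> < \<delta> \<longrightarrow> \<sigma> s \<in> ball (\<sigma> t) (r t) \<and>
        (\<forall>z\<in>ball (\<sigma> s) (r s) \<inter> ball (\<sigma> t) (r t). F z = F z)"
    proof (intro exI[of _ \<delta>] conjI ballI impI \<open>\<delta> > 0\<close>)
      fix s assume "s \<in> {0..1}" "\<bar>s - t\<bar> < \<delta>"
      show "\<sigma> s \<in> ball (\<sigma> t) (r t)"
      proof (cases "s = t")
        case True then show ?thesis using r[OF t] by simp
      next
        case False
        have "dist s t < \<delta>" using \<open>\<bar>s - t\<bar> < \<delta>\<close> by (simp add: dist_real_def)
        then have "dist (\<sigma> s) (\<sigma> t) < r t" using \<delta> False by blast
        then show ?thesis by (simp add: dist_commute)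
      qed
    qed simp
  next
    show "\<exists>e>0. ball (\<sigma> 0) e \<subseteq> U \<and> (\<forall>z\<in>ball (\<sigma> 0) e \<inter> ball (\<sigma> 0) (r 0). F z = f z)"
    proof (intro exI[of _ e] conjI ballI)
      show "e > 0" by (rule e(1))
      show "ball (\<sigma> 0) e \<subseteq> U" unfolding s0 by (rule e(2))
      fix z assume "z \<in> ball (\<sigma> 0) e \<inter> ball (\<sigma> 0) (r 0)"
      then have "z \<in> ball (complex_of_real t0) e" unfolding s0 by blast
      then show "F z = f z" using e(3) by blast
    qed
  qed
  moreover have "(\<lambda>s. F) 1 (\<sigma> 1) \<in> dmap ` N_set" using s1 FxN by simp
  ultimately show ?thesis unfolding real_points_over_dN_def
    by (intro CollectI exI[of _ \<sigma>] exI[of _ "\<lambda>s. F"] exI[of _ r] conjI s1)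
qed

lemma agree:
  assumes U: "open U" "holo2 f U" and D: "open D" "holo2 F D"
  and I: "open I" "t0 \<in> I" and t0: "complex_of_real t0 \<in> U" "complex_of_real t0 \<in> D"
  and eq: "\<forall>t\<in>I. f (complex_of_real t) = F (complex_of_real t)"
  shows "\<exists>e>0. ball (complex_of_real t0) e \<subseteq> U \<and> (\<forall>z\<in>ball (complex_of_real t0) e. F z = f z)"
proof -
  obtain e where e: "e > 0" "ball (complex_of_real t0) e \<subseteq> U \<inter> D"
    using open_Int[OF U(1) D(1)] t0 open_contains_ball by blast
  obtain \<delta> where \<delta>: "\<delta> > 0" "ball t0 \<delta> \<subseteq> I" using I open_contains_ball by blast
  define S where "S = ball (complex_of_real t0) e"
  define V where "V = complex_of_real ` ball t0 (min e \<delta>)"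
  have VS: "V \<subseteq> S" unfolding V_def S_def by (auto simp: dist_of_real)
  have lim: "complex_of_real t0 islimpt V"
    unfolding islimpt_approachable
  proof (intro allI impI)
    fix \<epsilon> :: real assume "\<epsilon> > 0"
    define y where "y = t0 + min \<epsilon> (min e \<delta>) / 2"
    have "min \<epsilon> (min e \<delta>) > 0" using \<open>\<epsilon> > 0\<close> e \<delta> by simp
    then have "y \<noteq> t0" "dist y t0 < min e \<delta>" "dist y t0 < \<epsilon>"
      unfolding y_def dist_real_def by auto
    then show "\<exists>x'\<in>V. x' \<noteq> complex_of_real t0 \<and> dist x' (complex_of_real t0) < \<epsilon>"
      unfolding V_def by (intro bexI[of _ "complex_of_real y"]) (auto simp: dist_of_real dist_commute)
  qed
  have VI: "V \<subseteq> complex_of_real ` I" unfolding V_def using \<delta> by auto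
  have SU: "S \<subseteq> U" and SD: "S \<subseteq> D" using e(2) unfolding S_def by blast+
  have hS: "(\<lambda>z. fst (f z) - fst (F z)) holomorphic_on S" "(\<lambda>z. snd (f z) - snd (F z)) holomorphic_on S"
  proof -
    have a: "(\<lambda>z. fst (f z)) holomorphic_on S" "(\<lambda>z. snd (f z)) holomorphic_on S"
      using U(2) holomorphic_on_subset[OF _ SU] unfolding holo2_def by blast+
    have b: "(\<lambda>z. fst (F z)) holomorphic_on S" "(\<lambda>z. snd (F z)) holomorphic_on S"
      using D(2) holomorphic_on_subset[OF _ SD] unfolding holo2_def by blast+
    show "(\<lambda>z. fst (f z) - fst (F z)) holomorphic_on S" by (rule holomorphic_on_diff[OF a(1) b(1)])
    show "(\<lambda>z. snd (f z) - snd (F z)) holomorphic_on S" by (rule holomorphic_on_diff[OF a(2) b(2)])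
  qed
  have cS: "connected S" "open S" "complex_of_real t0 \<in> S" unfolding S_def using e(1) by auto
  have eqV: "f z = F z" if zV: "z \<in> V" for z
  proof -
    obtain t where "t \<in> I" "z = complex_of_real t" using VI zV by blast
    then show ?thesis using eq by simp
  qed
  have FS: "F z = f z" if zS: "z \<in> S" for z
  proof -
    have "fst (f z) - fst (F z) = 0"
      by (rule analytic_continuation[OF hS(1) cS(2) cS(1) VS cS(3) lim _ zS]) (simp add: eqV)
    moreover have "snd (f z) - snd (F z) = 0"
      by (rule analytic_continuation[OF hS(2) cS(2) cS(1) VS cS(3) lim _ zS]) (simp add: eqV)
    ultimately show ?thesis by (simp add: prod_eq_iff)
  qed
  show ?thesis
  proof (intro exI[of _ e] conjI ballI)
    show "e > 0" by (rule e(1))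
    show "ball (complex_of_real t0) e \<subseteq> U" using SU unfolding S_def .
    fix z assume "z \<in> ball (complex_of_real t0) e"
    then show "F z = f z" using FS unfolding S_def by blast
  qed
qed

lemma assemble:
  assumes I: "is_interval I" "open I" "t0 \<in> I"
  and D: "open D" "holo2 F D" "F ` D \<subseteq> M_set"
  and half: "\<forall>z. Im z > 0 \<longrightarrow> z \<in> D" and strip: "\<forall>z. Re z \<in> I \<longrightarrow> z \<in> D"
  and Fg: "\<forall>t\<in>I. F (complex_of_real t) = dmap (\<gamma> t)"
  and Z: "discrete Z" "\<forall>x. x \<notin> Z \<longrightarrow> complex_of_real x \<in> D \<and> F (complex_of_real x) \<in> dmap ` N_set"
  shows "complete_curve I \<gamma>"
  unfolding complete_curve_def
proof (intro conjI allI impI)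
  define U0 where "U0 = Re -` I"
  have "open U0" unfolding U0_def
    by (rule continuous_open_vimage[OF I(2)]) (rule continuous_Re[OF continuous_ident])
  moreover have "convex U0" unfolding U0_def
    by (rule convex_linear_vimage[OF bounded_linear.linear[OF bounded_linear_Re]])
       (rule is_interval_convex[OF I(1)])
  then have "connected U0" by (rule convex_connected)
  moreover have "U0 \<subseteq> D" unfolding U0_def using strip by auto
  then have "holo2 F U0" using D(2) unfolding holo2_def by (meson holomorphic_on_subset)
  moreover have "F ` U0 \<subseteq> M_set" using D(3) \<open>U0 \<subseteq> D\<close> by blast
  moreover have "complex_of_real ` I \<subseteq> U0" unfolding U0_def by auto
  ultimately have "hol_extension I \<gamma> U0 F" unfolding hol_extension_def using Fg by blast
  then show "\<exists>U f. hol_extension I \<gamma> U f" by blast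
next
  fix U f assume h: "hol_extension I \<gamma> U f"
  have t0D: "complex_of_real t0 \<in> D" using strip I(3) by simp
  have t0U: "complex_of_real t0 \<in> U" using h I(3) unfolding hol_extension_def by auto
  have oU: "open U" and hf: "holo2 f U" using h unfolding hol_extension_def by blast+
  have eqf: "\<forall>t\<in>I. f (complex_of_real t) = F (complex_of_real t)"
    using h Fg unfolding hol_extension_def by simp
  have ag: "\<exists>e>0. ball (complex_of_real t0) e \<subseteq> U \<and> (\<forall>z\<in>ball (complex_of_real t0) e. F z = f z)"
    by (rule agree[OF oU hf D(1) D(2) I(2) I(3) t0U t0D eqf])
  then obtain e where e: "e > 0" "ball (complex_of_real t0) e \<subseteq> U"
     "\<forall>z\<in>ball (complex_of_real t0) e. F z = f z" by blast
  have "UNIV - real_points_over_dN f U \<subseteq> Z"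
  proof
    fix x assume x: "x \<in> UNIV - real_points_over_dN f U"
    show "x \<in> Z"
    proof (rule ccontr)
      assume "x \<notin> Z"
      have xD: "complex_of_real x \<in> D" and FxN: "F (complex_of_real x) \<in> dmap ` N_set"
        using Z(2) \<open>x \<notin> Z\<close> by blast+
      have "x \<in> real_points_over_dN f U"
        by (rule reach[OF oU t0U D(1) D(2) D(3) half t0D xD FxN e(1) e(2) e(3)])
      then show False using x by simp
    qed
  qed
  then show "discrete (UNIV - real_points_over_dN f U)" using discrete_subset[OF Z(1)] by blast
qed



lemma scalar_0:
  fixes p :: "real \<Rightarrow> real"
  assumes I: "is_interval I" "open I" "t0 \<in> I"
  and d: "\<forall>t\<in>I. (p has_real_derivative a*(p t^2 + c^2)) (at t)"
  and c: "c = 0" and nz: "\<forall>t\<in>I. p t^2 + c^2 \<noteq> 0"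
  shows "\<exists>P D Z. open D \<and> P holomorphic_on D \<and> (\<forall>z\<in>D. (P z)^2 + (of_real c)^2 \<noteq> 0) \<and>
     (\<forall>z. Im z > 0 \<longrightarrow> z \<in> D) \<and> (\<forall>z. Re z \<in> I \<longrightarrow> z \<in> D) \<and>
     (\<forall>x. x \<notin> Z \<longrightarrow> complex_of_real x \<in> D) \<and> (\<forall>x. complex_of_real x \<in> D \<longrightarrow> P (of_real x) \<in> \<real>) \<and>
     discrete Z \<and> (\<forall>t\<in>I. P (of_real t) = of_real (p t))"
proof -
  have pnz: "p t \<noteq> 0" if "t \<in> I" for t using nz that c by simp
  have dq: "((\<lambda>t. inverse (p t) + a*t) has_real_derivative 0) (at t)" if t: "t \<in> I" for t
  proof -
    have d1: "(p has_real_derivative a*(p t^2 + c^2)) (at t)" using d t by blast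
    have "((\<lambda>t. inverse (p t)) has_real_derivative - (a*(p t^2 + c^2) * inverse (p t ^ Suc (Suc 0)))) (at t)"
      by (rule DERIV_inverse_fun[OF d1 pnz[OF t]])
    moreover have "((\<lambda>t. a*t) has_real_derivative a) (at t)"
      by (auto intro!: derivative_eq_intros)
    ultimately have D1: "((\<lambda>t. inverse (p t) + a*t) has_real_derivative
        - (a*(p t^2 + c^2) * inverse (p t ^ Suc (Suc 0))) + a) (at t)"
      by (rule DERIV_add)
    have E: "- (a*(p t^2 + c^2) * inverse (p t ^ Suc (Suc 0))) + a = 0"
      using pnz[OF t] c by (simp add: field_simps power2_eq_square)
    show ?thesis using D1 unfolding E .
  qed
  have "convex I" using I(1) by (rule is_interval_convex)
  then obtain \<beta> where \<beta>: "\<forall>t\<in>I. inverse (p t) + a*t = \<beta>"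
    using has_field_derivative_zero_constant[of I "\<lambda>t. inverse (p t) + a*t"] dq
    by (meson has_field_derivative_at_within)
  have bt: "\<beta> - a*t = inverse (p t)" if "t \<in> I" for t using \<beta> that by force
  have bt0: "\<beta> - a*t \<noteq> 0" if "t \<in> I" for t using bt[OF that] pnz[OF that] by simp
  define q where "q z = complex_of_real \<beta> - complex_of_real a * z" for z
  define P where "P z = 1 / q z" for z
  define D where "D = {z. q z \<noteq> 0}"
  define Z where "Z = {x. \<beta> - a*x = 0}"
  have qr: "q (of_real x) = of_real (\<beta> - a*x)" for x unfolding q_def by simp
  have Imq: "Im (q z) = - a * Im z" for z unfolding q_def by simp
  have Req: "Re (q z) = \<beta> - a * Re z" for z unfolding q_def by simp
  have inD: "z \<in> D" if "a = 0 \<or> (Im z = 0 \<and> Re z \<in> I)" for z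
  proof (rule ccontr)
    assume "z \<notin> D"
    then have q0: "q z = 0" by (simp add: D_def)
    then have r0: "\<beta> - a * Re z = 0" using Req[of z] by simp
    from that show False
    proof
      assume "a = 0"
      then show False using r0 bt0[OF I(3)] by simp
    next
      assume "Im z = 0 \<and> Re z \<in> I"
      then show False using r0 bt0 by blast
    qed
  qed
  have "open D" unfolding D_def q_def
    by (rule open_Collect_neq) (auto intro!: continuous_intros)
  moreover have "P holomorphic_on D" unfolding P_def D_def q_def
    by (auto intro!: holomorphic_intros)
  moreover have "\<forall>z\<in>D. (P z)^2 + (of_real c)^2 \<noteq> 0"
    using c by (simp add: P_def D_def)
  moreover have "\<forall>z. Im z > 0 \<longrightarrow> z \<in> D"
  proof (intro allI impI)
    fix z :: complex assume iz: "Im z > 0"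
    show "z \<in> D"
    proof (cases "a = 0")
      case True then show ?thesis using inD by blast
    next
      case False
      show ?thesis
      proof (rule ccontr)
        assume "z \<notin> D"
        then have "q z = 0" by (simp add: D_def)
        then have "Im (q z) = 0" by simp
        then show False using False iz Imq[of z] by simp
      qed
    qed
  qed
  moreover have "\<forall>z. Re z \<in> I \<longrightarrow> z \<in> D"
  proof (intro allI impI)
    fix z :: complex assume zI: "Re z \<in> I"
    show "z \<in> D"
    proof (cases "a = 0")
      case True then show ?thesis using inD by blast
    next
      case False
      show ?thesis
      proof (rule ccontr)
        assume "z \<notin> D"
        then have "q z = 0" by (simp add: D_def)
        then have "Im (q z) = 0" by simp
        then have "Im z = 0" using False Imq[of z] by simp
        then show False using inD zI \<open>z \<notin> D\<close> by blast
      qed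
    qed
  qed
  moreover have "\<forall>x. x \<notin> Z \<longrightarrow> complex_of_real x \<in> D"
  proof (intro allI impI)
    fix x assume "x \<notin> Z"
    then have "\<beta> - a*x \<noteq> 0" by (simp add: Z_def)
    then have "q (of_real x) \<noteq> 0" unfolding qr by (simp only: of_real_eq_0_iff not_False_eq_True)
    then show "complex_of_real x \<in> D" by (simp add: D_def)
  qed
  moreover have "\<forall>x. complex_of_real x \<in> D \<longrightarrow> P (of_real x) \<in> \<real>"
  proof (intro allI impI)
    fix x :: real
    have "P (of_real x) = of_real (1 / (\<beta> - a*x))" unfolding P_def qr by simp
    then show "P (of_real x) \<in> \<real>" by simp
  qed
  moreover have "discrete Z"
  proof -
    have "uniform_discrete Z"
    proof (rule uniformI1[of 1])
      show "(1::real) > 0" by simp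
      fix x y assume "x \<in> Z" "y \<in> Z" "dist x y < 1"
      then have xy: "\<beta> - a*x = 0" "\<beta> - a*y = 0" by (auto simp: Z_def)
      have "a \<noteq> 0" using xy(1) bt0[OF I(3)] by auto
      moreover have "a*x = a*y" using xy by simp
      ultimately show "x = y" by simp
    qed
    then show ?thesis by (rule uniform_discrete_imp_discrete)
  qed
  moreover have "\<forall>t\<in>I. P (of_real t) = of_real (p t)"
  proof
    fix t assume t: "t \<in> I"
    have "P (of_real t) = of_real (1 / (\<beta> - a*t))" unfolding P_def qr by simp
    also have "\<dots> = of_real (p t)" unfolding bt[OF t] by (simp add: divide_inverse)
    finally show "P (of_real t) = of_real (p t)" .
  qed
  ultimately show ?thesis by (intro exI[of _ P] exI[of _ D] exI[of _ Z]) blast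
qed

lemma scalar:
  fixes p :: "real \<Rightarrow> real"
  assumes I: "is_interval I" "open I" "t0 \<in> I"
  and d: "\<forall>t\<in>I. (p has_real_derivative a*(p t^2 + c^2)) (at t)"
  and nz: "\<forall>t\<in>I. p t^2 + c^2 \<noteq> 0"
  shows "\<exists>P D Z. open D \<and> P holomorphic_on D \<and> (\<forall>z\<in>D. (P z)^2 + (of_real c)^2 \<noteq> 0) \<and>
     (\<forall>z. Im z > 0 \<longrightarrow> z \<in> D) \<and> (\<forall>z. Re z \<in> I \<longrightarrow> z \<in> D) \<and>
     (\<forall>x. x \<notin> Z \<longrightarrow> complex_of_real x \<in> D) \<and> (\<forall>x. complex_of_real x \<in> D \<longrightarrow> P (of_real x) \<in> \<real>) \<and>
     discrete Z \<and> (\<forall>t\<in>I. P (of_real t) = of_real (p t))"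
proof (cases "c = 0")
  case True then show ?thesis using scalar_0[OF I d True nz] by blast
next
  case False then show ?thesis using scalar_c[OF I d False] by blast
qed

lemma const_ratio:
  fixes u v u1 v1 u2 :: "real \<Rightarrow> real"
  assumes cI: "convex I"
  and du: "\<forall>t\<in>I. (u has_real_derivative u1 t) (at t)"
  and dv: "\<forall>t\<in>I. (v has_real_derivative v1 t) (at t)"
  and du1: "\<forall>t\<in>I. (u1 has_real_derivative u2 t) (at t)"
  and eq: "\<forall>t\<in>I. u2 t * (u t^2 + v t^2) = 2 * u t * (u1 t)^2"
  and null: "\<forall>t\<in>I. u1 t * v1 t = 0"
  and nz: "\<forall>t\<in>I. u t^2 + v t^2 \<noteq> 0"
  shows "\<exists>a. \<forall>t\<in>I. u1 t = a * (u t^2 + v t^2)"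
proof -
  have dz: "((\<lambda>t. u1 t / (u t^2 + v t^2)) has_real_derivative 0) (at t)" if t: "t \<in> I" for t
  proof -
    have R: "((\<lambda>t. u t^2 + v t^2) has_real_derivative 2 * u t * u1 t + 2 * v t * v1 t) (at t)"
      using du dv t by (auto intro!: derivative_eq_intros)
    have "((\<lambda>t. u1 t / (u t^2 + v t^2)) has_real_derivative
       (u2 t * (u t^2 + v t^2) - u1 t * (2 * u t * u1 t + 2 * v t * v1 t)) / ((u t^2 + v t^2) * (u t^2 + v t^2))) (at t)"
      by (rule DERIV_divide[OF _ R]) (use du1 t nz in auto)
    moreover have E: "u2 t * (u t^2 + v t^2) - u1 t * (2 * u t * u1 t + 2 * v t * v1 t) = 0"
    proof -
      have "u2 t * (u t^2 + v t^2) - u1 t * (2 * u t * u1 t + 2 * v t * v1 t)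
          = 2 * u t * (u1 t)^2 - 2 * u t * (u1 t)^2 - 2 * v t * (u1 t * v1 t)"
        using eq t by (simp add: algebra_simps power2_eq_square)
      then show ?thesis using null t by simp
    qed
    ultimately show ?thesis unfolding E by simp
  qed
  obtain a where a: "\<forall>t\<in>I. u1 t / (u t^2 + v t^2) = a"
    using has_field_derivative_zero_constant[of I "\<lambda>t. u1 t / (u t^2 + v t^2)"] cI dz
    by (meson has_field_derivative_at_within)
  show ?thesis
  proof (intro exI[of _ a] ballI)
    fix t assume t: "t \<in> I"
    then have "u1 t / (u t^2 + v t^2) = a" using a by blast
    then show "u1 t = a * (u t^2 + v t^2)" using nz t by (simp add: field_simps)
  qed
qed

lemma comp_deriv:
  assumes "(g has_vector_derivative w) (at t)"
  shows "((\<lambda>t. fst (g t)) has_real_derivative fst w) (at t)"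
    "((\<lambda>t. snd (g t)) has_real_derivative snd w) (at t)"
proof -
  have h: "(g has_derivative (\<lambda>h. h *\<^sub>R w)) (at t)" using assms by (simp add: has_vector_derivative_def)
  have e1: "(\<lambda>h. fst (h *\<^sub>R w)) = (*) (fst w)" by (auto simp: fun_eq_iff)
  have e2: "(\<lambda>h. snd (h *\<^sub>R w)) = (*) (snd w)" by (auto simp: fun_eq_iff)
  show "((\<lambda>t. fst (g t)) has_real_derivative fst w) (at t)"
    using has_derivative_fst[OF h] unfolding e1 has_field_derivative_def .
  show "((\<lambda>t. snd (g t)) has_real_derivative snd w) (at t)"
    using has_derivative_snd[OF h] unfolding e2 has_field_derivative_def .
qed



lemma finish:
  fixes p :: "real \<Rightarrow> real" and sw :: bool
  assumes I: "is_interval I" "open I" "t0 \<in> I"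
  and S: "open D" "P holomorphic_on D" "\<forall>z\<in>D. (P z)^2 + (of_real c)^2 \<noteq> 0"
     "\<forall>z. Im z > 0 \<longrightarrow> z \<in> D" "\<forall>z. Re z \<in> I \<longrightarrow> z \<in> D"
     "\<forall>x. x \<notin> Z \<longrightarrow> complex_of_real x \<in> D" "\<forall>x. complex_of_real x \<in> D \<longrightarrow> P (of_real x) \<in> \<real>"
     "discrete Z" "\<forall>t\<in>I. P (of_real t) = of_real (p t)"
  and g: "\<forall>t\<in>I. \<gamma> t = (if sw then (c, p t) else (p t, c))"
  shows "complete_curve I \<gamma>"
proof -
  define F where "F z = (if sw then (complex_of_real c, P z) else (P z, complex_of_real c))" for z
  have hc: "(\<lambda>z. complex_of_real c) holomorphic_on D" by (rule holomorphic_on_const)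
  have "holo2 F D" unfolding holo2_def F_def
    using S(2) hc by (cases sw) simp_all
  moreover have "F ` D \<subseteq> M_set"
  proof
    fix y assume "y \<in> F ` D"
    then obtain z where z: "z \<in> D" "y = F z" by blast
    have "(P z)^2 + (of_real c)^2 \<noteq> 0" using S(3) z(1) by blast
    then show "y \<in> M_set" unfolding z(2) F_def by (cases sw) (simp_all add: M_iff add.commute)
  qed
  moreover have "\<forall>t\<in>I. F (complex_of_real t) = dmap (\<gamma> t)"
  proof
    fix t assume t: "t \<in> I"
    show "F (complex_of_real t) = dmap (\<gamma> t)"
      using g t S(9) t unfolding F_def dmap_def by (cases sw) simp_all
  qed
  moreover have "\<forall>x. x \<notin> Z \<longrightarrow> complex_of_real x \<in> D \<and> F (complex_of_real x) \<in> dmap ` N_set"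
  proof (intro allI impI conjI)
    fix x assume x: "x \<notin> Z"
    show xD: "complex_of_real x \<in> D" using S(6) x by blast
    have "P (of_real x) \<in> \<real>" using S(7) xD by blast
    then have Pr: "P (of_real x) = of_real (Re (P (of_real x)))" by (simp add: Reals_cases)
    define y where "y = Re (P (of_real x))"
    have "(P (of_real x))^2 + (of_real c)^2 \<noteq> 0" using S(3) xD by blast
    then have yc: "\<not> (y = 0 \<and> c = 0)" using Pr unfolding y_def by auto
    have "F (complex_of_real x) = dmap (if sw then (c, y) else (y, c))"
      unfolding F_def dmap_def using Pr unfolding y_def[symmetric] by (cases sw) simp_all
    moreover have "(if sw then (c, y) else (y, c)) \<in> N_set" using yc unfolding N_set_def by auto
    ultimately show "F (complex_of_real x) \<in> dmap ` N_set" by blast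
  qed
  ultimately show ?thesis
    using assemble[OF I S(1) _ _ S(4) S(5) _ S(8)] by blast
qed

lemma geod_facts:
  assumes "is_null_geodesic I \<gamma>"
  obtains \<gamma>' \<gamma>'' where "is_interval I" "open I" "I \<noteq> {}"
    "\<forall>t\<in>I. r2 (\<gamma> t) \<noteq> 0"
    "\<forall>t\<in>I. (\<gamma> has_vector_derivative \<gamma>' t) (at t)"
    "\<forall>t\<in>I. (\<gamma>' has_vector_derivative \<gamma>'' t) (at t)"
    "\<forall>t\<in>I. fst (\<gamma>'' t) * r2 (\<gamma> t) = 2 * fst (\<gamma> t) * (fst (\<gamma>' t))^2"
    "\<forall>t\<in>I. snd (\<gamma>'' t) * r2 (\<gamma> t) = 2 * snd (\<gamma> t) * (snd (\<gamma>' t))^2"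
    "\<forall>t\<in>I. fst (\<gamma>' t) * snd (\<gamma>' t) = 0"
proof -
  from assms have I: "is_interval I" "open I" "I \<noteq> {}" and N: "\<gamma> ` I \<subseteq> N_set"
    and null: "\<forall>t\<in>I. fst (vector_derivative \<gamma> (at t)) * snd (vector_derivative \<gamma> (at t)) = 0"
    and ex: "\<exists>\<gamma>' \<gamma>''. \<forall>t\<in>I. (\<gamma> has_vector_derivative \<gamma>' t) (at t) \<and>
        (\<gamma>' has_vector_derivative \<gamma>'' t) (at t) \<and>
        (\<forall>k<2. coord k (\<gamma>'' t) +
           (\<Sum>i<2. \<Sum>j<2. christoffel gN k i j (\<gamma> t) * coord i (\<gamma>' t) * coord j (\<gamma>' t)) = 0)"
    unfolding is_null_geodesic_def is_geodesic_def by blast+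
  from ex obtain \<gamma>' \<gamma>'' where G: "\<forall>t\<in>I. (\<gamma> has_vector_derivative \<gamma>' t) (at t) \<and>
        (\<gamma>' has_vector_derivative \<gamma>'' t) (at t) \<and>
        (\<forall>k<2. coord k (\<gamma>'' t) +
           (\<Sum>i<2. \<Sum>j<2. christoffel gN k i j (\<gamma> t) * coord i (\<gamma>' t) * coord j (\<gamma>' t)) = 0)"
    by blast
  have R: "\<forall>t\<in>I. r2 (\<gamma> t) \<noteq> 0"
  proof
    fix t assume t: "t \<in> I"
    then have "\<gamma> t \<noteq> (0, 0)" using N unfolding N_set_def by blast
    then show "r2 (\<gamma> t) \<noteq> 0" unfolding r2_def by (cases "\<gamma> t") simp
  qed
  have E: "fst (\<gamma>'' t) * r2 (\<gamma> t) = 2 * fst (\<gamma> t) * (fst (\<gamma>' t))^2 \<and>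
      snd (\<gamma>'' t) * r2 (\<gamma> t) = 2 * snd (\<gamma> t) * (snd (\<gamma>' t))^2" if t: "t \<in> I" for t
  proof -
    have Rt: "r2 (\<gamma> t) \<noteq> 0" using R t by blast
    have k0: "coord 0 (\<gamma>'' t) +
           (\<Sum>i<2. \<Sum>j<2. christoffel gN 0 i j (\<gamma> t) * coord i (\<gamma>' t) * coord j (\<gamma>' t)) = 0"
      and k1: "coord 1 (\<gamma>'' t) +
           (\<Sum>i<2. \<Sum>j<2. christoffel gN 1 i j (\<gamma> t) * coord i (\<gamma>' t) * coord j (\<gamma>' t)) = 0"
      using G t by auto
    have c0: "fst (\<gamma>'' t) + (- 2 * fst (\<gamma> t) / r2 (\<gamma> t)) * fst (\<gamma>' t) * fst (\<gamma>' t) = 0"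
      using k0 Rt by (simp add: numeral_2_eq_2 lessThan_Suc coord_def chr chr[unfolded One_nat_def])
    have c1: "snd (\<gamma>'' t) + (- 2 * snd (\<gamma> t) / r2 (\<gamma> t)) * snd (\<gamma>' t) * snd (\<gamma>' t) = 0"
      using k1 Rt by (simp add: numeral_2_eq_2 lessThan_Suc coord_def chr chr[unfolded One_nat_def])
    show ?thesis using c0 c1 Rt by (simp add: field_simps power2_eq_square)
  qed
  have nl: "\<forall>t\<in>I. fst (\<gamma>' t) * snd (\<gamma>' t) = 0"
  proof
    fix t assume t: "t \<in> I"
    then have "vector_derivative \<gamma> (at t) = \<gamma>' t" using G by (simp add: vector_derivative_at)
    then show "fst (\<gamma>' t) * snd (\<gamma>' t) = 0" using null t by metis
  qed
  show ?thesis
    by (rule that[of \<gamma>' \<gamma>'']) (use I R G E nl in auto)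
qed



theorem mainTheorem2:
  fixes I :: "real set" and \<gamma> :: "real \<Rightarrow> real \<times> real"
  assumes "is_null_geodesic I \<gamma>"
  shows "complete_curve I \<gamma>"
proof -
  obtain \<gamma>' \<gamma>'' where I: "is_interval I" "open I" "I \<noteq> {}"
    and R: "\<forall>t\<in>I. r2 (\<gamma> t) \<noteq> 0"
    and G1: "\<forall>t\<in>I. (\<gamma> has_vector_derivative \<gamma>' t) (at t)"
    and G2: "\<forall>t\<in>I. (\<gamma>' has_vector_derivative \<gamma>'' t) (at t)"
    and E1: "\<forall>t\<in>I. fst (\<gamma>'' t) * r2 (\<gamma> t) = 2 * fst (\<gamma> t) * (fst (\<gamma>' t))^2"
    and E2: "\<forall>t\<in>I. snd (\<gamma>'' t) * r2 (\<gamma> t) = 2 * snd (\<gamma> t) * (snd (\<gamma>' t))^2"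
    and nl: "\<forall>t\<in>I. fst (\<gamma>' t) * snd (\<gamma>' t) = 0"
    using geod_facts[OF assms] by blast
  obtain t0 where t0: "t0 \<in> I" using I(3) by blast
  have cI: "convex I" using I(1) by (rule is_interval_convex)
  define u where "u = (\<lambda>t. fst (\<gamma> t))"
  define v where "v = (\<lambda>t. snd (\<gamma> t))"
  define u1 where "u1 = (\<lambda>t. fst (\<gamma>' t))"
  define v1 where "v1 = (\<lambda>t. snd (\<gamma>' t))"
  define u2 where "u2 = (\<lambda>t. fst (\<gamma>'' t))"
  define v2 where "v2 = (\<lambda>t. snd (\<gamma>'' t))"
  have du: "\<forall>t\<in>I. (u has_real_derivative u1 t) (at t)"
    using G1 comp_deriv(1) unfolding u_def u1_def by blast
  have dv: "\<forall>t\<in>I. (v has_real_derivative v1 t) (at t)"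
    using G1 comp_deriv(2) unfolding v_def v1_def by blast
  have du1: "\<forall>t\<in>I. (u1 has_real_derivative u2 t) (at t)"
    using G2 comp_deriv(1) unfolding u2_def u1_def by blast
  have dv1: "\<forall>t\<in>I. (v1 has_real_derivative v2 t) (at t)"
    using G2 comp_deriv(2) unfolding v2_def v1_def by blast
  have r2e: "r2 (\<gamma> t) = u t^2 + v t^2" for t unfolding r2_def u_def v_def ..
  have nzu: "\<forall>t\<in>I. u t^2 + v t^2 \<noteq> 0" using R unfolding r2e by blast
  have nzv: "\<forall>t\<in>I. v t^2 + u t^2 \<noteq> 0" using nzu by (simp add: add.commute)
  have equ: "\<forall>t\<in>I. u2 t * (u t^2 + v t^2) = 2 * u t * (u1 t)^2"
    using E1 unfolding r2e u_def u1_def u2_def v_def by blast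
  have eqv: "\<forall>t\<in>I. v2 t * (v t^2 + u t^2) = 2 * v t * (v1 t)^2"
    using E2 unfolding r2e u_def v1_def v2_def v_def by (simp add: add.commute)
  have nlu: "\<forall>t\<in>I. u1 t * v1 t = 0" using nl unfolding u1_def v1_def by blast
  have nlv: "\<forall>t\<in>I. v1 t * u1 t = 0" using nlu by (simp add: mult.commute)
  obtain a where a: "\<forall>t\<in>I. u1 t = a * (u t^2 + v t^2)"
    using const_ratio[OF cI du dv du1 equ nlu nzu] by blast
  obtain b where b: "\<forall>t\<in>I. v1 t = b * (v t^2 + u t^2)"
    using const_ratio[OF cI dv du dv1 eqv nlv nzv] by blast
  have "a * b * (u t0^2 + v t0^2)^2 = 0"
  proof -
    have "u1 t0 * v1 t0 = a * (u t0^2 + v t0^2) * (b * (v t0^2 + u t0^2))" using a b t0 by simp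
    then show ?thesis using nlu t0 by (simp add: algebra_simps power2_eq_square)
  qed
  then have ab: "a = 0 \<or> b = 0" using nzu t0 by fastforce
  then show ?thesis
  proof
    assume b0: "b = 0"
    have "\<forall>t\<in>I. (v has_real_derivative 0) (at t within I)"
      using dv b b0 by (metis has_field_derivative_at_within mult_zero_left)
    then obtain c where c: "\<forall>t\<in>I. v t = c"
      using has_field_derivative_zero_constant[OF cI] by metis
    have d: "\<forall>t\<in>I. (u has_real_derivative a*(u t^2 + c^2)) (at t)"
      using du a c by simp
    have nz: "\<forall>t\<in>I. u t^2 + c^2 \<noteq> 0" using nzu c by simp
    obtain P D Z where S: "open D" "P holomorphic_on D" "\<forall>z\<in>D. (P z)^2 + (of_real c)^2 \<noteq> 0"
     "\<forall>z. Im z > 0 \<longrightarrow> z \<in> D" "\<forall>z. Re z \<in> I \<longrightarrow> z \<in> D"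
     "\<forall>x. x \<notin> Z \<longrightarrow> complex_of_real x \<in> D" "\<forall>x. complex_of_real x \<in> D \<longrightarrow> P (of_real x) \<in> \<real>"
     "discrete Z" "\<forall>t\<in>I. P (of_real t) = of_real (u t)"
      using scalar[OF I(1) I(2) t0 d nz] by blast
    have g: "\<forall>t\<in>I. \<gamma> t = (if False then (c, u t) else (u t, c))"
      using c unfolding u_def v_def by (simp add: prod_eq_iff)
    show ?thesis by (rule finish[OF I(1) I(2) t0 S g])
  next
    assume a0: "a = 0"
    have "\<forall>t\<in>I. (u has_real_derivative 0) (at t within I)"
      using du a a0 by (metis has_field_derivative_at_within mult_zero_left)
    then obtain c where c: "\<forall>t\<in>I. u t = c"
      using has_field_derivative_zero_constant[OF cI] by metis
    have d: "\<forall>t\<in>I. (v has_real_derivative b*(v t^2 + c^2)) (at t)"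
      using dv b c by simp
    have nz: "\<forall>t\<in>I. v t^2 + c^2 \<noteq> 0" using nzv c by simp
    obtain P D Z where S: "open D" "P holomorphic_on D" "\<forall>z\<in>D. (P z)^2 + (of_real c)^2 \<noteq> 0"
     "\<forall>z. Im z > 0 \<longrightarrow> z \<in> D" "\<forall>z. Re z \<in> I \<longrightarrow> z \<in> D"
     "\<forall>x. x \<notin> Z \<longrightarrow> complex_of_real x \<in> D" "\<forall>x. complex_of_real x \<in> D \<longrightarrow> P (of_real x) \<in> \<real>"
     "discrete Z" "\<forall>t\<in>I. P (of_real t) = of_real (v t)"
      using scalar[OF I(1) I(2) t0 d nz] by blast
    have g: "\<forall>t\<in>I. \<gamma> t = (if True then (c, v t) else (v t, c))"
      using c unfolding u_def v_def by (simp add: prod_eq_iff)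
    show ?thesis by (rule finish[OF I(1) I(2) t0 S g])
  qed
qed

end
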